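(* Suppose $\widehat{\mathcal L}^{Y\text{-}A\text{-}B}$-uniform-monotonicity holds for the SCC $F$. Then (a) for all $(j,\theta')\in\mathcal I\times\Theta$, if $Z^*$ is a $j$-$Z^*$-$\theta'$-max set then $Z^*\subseteq F(\theta')$; and (b) for all $(j,\theta,\theta')\in\mathcal I\times\Theta\times\Theta$, if $\widehat\Gamma_j^{A\text{-}B}(\theta)$ is a $j$-$Z^*$-$\theta'$-max set then $\widehat\Gamma_j^{A\text{-}B}(\theta)\subseteq F(\theta')$, where $\widehat\Gamma_j^{A\text{-}B}(\theta)=\bigcup_{y\in\widehat{\mathcal L}_j^{Y\text{-}A\text{-}B}(\mathrm{UNIF}[F(\theta)],\theta)}\mathrm{SUPP}[y]$.
   Context: Standing setup: $\mathcal I=\{1,\dots,I\}$ finite, $I\ge 3$; $\Theta$ finite or countably infinite; $Z$ finite; $Y=\Delta(Z)$; $F:\Theta\to 2^Z\setminus\{\emptyset\}$; $u_i^\theta:Z\to\mathbb R$, $U_i^\theta(y)=\sum_zy_zu_i^\theta(z)$; $\mathcal L_i^Y(\alpha,\theta)=\{y\in Y:U_i^\theta(\alpha)\ge U_i^\theta(y)\}$, $\mathcal L_i^Z(\alpha,\theta)=\{z\in Z:U_i^\theta(\alpha)\ge u_i^\theta(z)\}$, $\mathcal L_i^Z(E,\theta)=\bigcap_{z\in E}\mathcal L_i^Z(z,\theta)$; UNIF$(E)$ is the uniform lottery on $E$. A nonempty $E\subseteq Z$ is an $i$-max set if for some $\theta$, $E\subseteq\arg\max_{z\in E}u_i^\theta(z)$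 and $E\subseteq\arg\max_{z\in Z}u_j^\theta(z)$ for all $j\ne i$. $Z^*=\bigcup_\theta F(\theta)$ if $Z$ is an $i$-max set for some $i$, else $Z^*=Z$. A nonempty $E\subseteq Z^*$ is an $i$-$Z^*$-$\theta$-max set if $E\subseteq\arg\max_{z\in E}u_i^\theta(z)$ and $E\subseteq\arg\max_{z\in Z^*}u_j^\theta(z)$ for all $j\ne i$; $\Lambda^i(E)=\{\theta:E\text{ is an }i\text{-}Z^*\text{-}\theta\text{-max set}\}$ ($=\emptyset$ for $E=\emptyset$); $E$ is an $i$-$Z^*$-max set if $\Lambda^i(E)\ne\emptyset$. $\Theta_i^\theta=\{\theta':F(\theta)\text{ is an }i\text{-}Z^*\text{-}\theta'\text{-max set and }F(\theta)\subseteq F(\theta')\}$; $\Xi_i(\theta)=\{K\subseteq\Theta_i^\theta,K\ne\emptyset:\Theta_i^\theta\cap\Lambda^i(Z^*\cap\mathcal L_i^Z(F(\theta),\theta)\cap\bigcap_{\theta'\in K}F(\theta'))=K\}$. $\widehat{\mathcal L}_i^{Y\text{-}A\text{-}B}(\mathrm{UNIF}[F(\theta)],\theta)=\Delta[Z^*\cap\mathcal L_i^Z(F(\theta),\theta)\cap\bigcup_{K\in\Xi_i(\theta)}\bigcap_{\theta'\in K}F(\theta')]$ if $F(\theta)\subseteq\arg\min_{z\in Z^*}u_i^\theta(z)$, $\Xi_i(\theta)\ne\emptyset$ and $Z^*\cap\mathcal L_i^Z(F(\theta),\theta)$ is an $i$-$Z^*$-max set; otherwise $\Delta(Z^* )\cap\mathcal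 L_i^Y(\mathrm{UNIF}[F(\theta)],\theta)$. $\widehat{\mathcal L}^{Y\text{-}A\text{-}B}$-uniform-monotonicity: for all $\theta,\theta'$, [$\widehat{\mathcal L}_i^{Y\text{-}A\text{-}B}(\mathrm{UNIF}[F(\theta)],\theta)\subseteq\mathcal L_i^Y(\mathrm{UNIF}[F(\theta)],\theta')$ for all $i$] implies $F(\theta)\subseteq F(\theta')$. *)

theory Defs
  imports Complex_Main "HOL-Library.Countable"
begin

text \<open>Agents: a finite type 'i; states: a countable type 'th; outcomes: a finite type 'z.
  u :: 'i => 'th => 'z => real gives u_i^theta; F :: 'th => 'z set is the SCC.
  Lotteries in Y = Delta(Z) are represented as functions 'z => real.\<close>

definition lottery :: "('z::finite \<Rightarrow> real) \<Rightarrow> bool" where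
  "lottery y \<longleftrightarrow> (\<forall>z. y z \<ge> 0) \<and> sum y UNIV = 1"

definition supp :: "('z \<Rightarrow> real) \<Rightarrow> 'z set" where
  "supp y = {z. y z \<noteq> 0}"

definition Lot :: "'z::finite set \<Rightarrow> ('z \<Rightarrow> real) set" where
  "Lot E = {y. lottery y \<and> supp y \<subseteq> E}"

definition unif :: "'z set \<Rightarrow> ('z \<Rightarrow> real)" where
  "unif E = (\<lambda>z. if z \<in> E then 1 / real (card E) else 0)"

definition EU :: "('i \<Rightarrow> 'th \<Rightarrow> 'z::finite \<Rightarrow> real) \<Rightarrow> 'i \<Rightarrow> 'th \<Rightarrow> ('z \<Rightarrow> real) \<Rightarrow> real" where
  "EU u i th y = (\<Sum>z\<in>UNIV. y z * u i th z)"

definition LY :: "('i \<Rightarrow> 'th \<Rightarrow> 'z::finite \<Rightarrow> real) \<Rightarrow> 'i \<Rightarrow> ('z \<Rightarrow> real) \<Rightarrow> 'th \<Rightarrow> ('z \<Rightarrow> real) set" where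
  "LY u i \<alpha> th = {y. lottery y \<and> EU u i th \<alpha> \<ge> EU u i th y}"

definition LZ :: "('i \<Rightarrow> 'th \<Rightarrow> 'z \<Rightarrow> real) \<Rightarrow> 'i \<Rightarrow> 'z set \<Rightarrow> 'th \<Rightarrow> 'z set" where
  "LZ u i E th = {z. \<forall>z'\<in>E. u i th z' \<ge> u i th z}"

definition argmax_on :: "('z \<Rightarrow> real) \<Rightarrow> 'z set \<Rightarrow> 'z set" where
  "argmax_on f S = {z \<in> S. \<forall>z'\<in>S. f z' \<le> f z}"

definition argmin_on :: "('z \<Rightarrow> real) \<Rightarrow> 'z set \<Rightarrow> 'z set" where
  "argmin_on f S = {z \<in> S. \<forall>z'\<in>S. f z \<le> f z'}"

definition imax :: "('i \<Rightarrow> 'th \<Rightarrow> 'z \<Rightarrow> real) \<Rightarrow> 'i \<Rightarrow> 'z set \<Rightarrow> bool" where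
  "imax u i E \<longleftrightarrow> E \<noteq> {} \<and> (\<exists>th. E \<subseteq> argmax_on (u i th) E \<and>
      (\<forall>j. j \<noteq> i \<longrightarrow> E \<subseteq> argmax_on (u j th) UNIV))"

definition Zstar :: "('i \<Rightarrow> 'th \<Rightarrow> 'z \<Rightarrow> real) \<Rightarrow> ('th \<Rightarrow> 'z set) \<Rightarrow> 'z set" where
  "Zstar u F = (if \<exists>i. imax u i UNIV then (\<Union>th. F th) else UNIV)"

definition zmax :: "('i \<Rightarrow> 'th \<Rightarrow> 'z \<Rightarrow> real) \<Rightarrow> ('th \<Rightarrow> 'z set) \<Rightarrow> 'i \<Rightarrow> 'th \<Rightarrow> 'z set \<Rightarrow> bool" where
  "zmax u F i th E \<longleftrightarrow> E \<noteq> {} \<and> E \<subseteq> Zstar u F \<and> E \<subseteq> argmax_on (u i th) E \<and>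
      (\<forall>j. j \<noteq> i \<longrightarrow> E \<subseteq> argmax_on (u j th) (Zstar u F))"

definition Lam :: "('i \<Rightarrow> 'th \<Rightarrow> 'z \<Rightarrow> real) \<Rightarrow> ('th \<Rightarrow> 'z set) \<Rightarrow> 'i \<Rightarrow> 'z set \<Rightarrow> 'th set" where
  "Lam u F i E = {th. zmax u F i th E}"

definition ThetaI :: "('i \<Rightarrow> 'th \<Rightarrow> 'z \<Rightarrow> real) \<Rightarrow> ('th \<Rightarrow> 'z set) \<Rightarrow> 'i \<Rightarrow> 'th \<Rightarrow> 'th set" where
  "ThetaI u F i th = {th'. zmax u F i th' (F th) \<and> F th \<subseteq> F th'}"

definition Xi :: "('i \<Rightarrow> 'th \<Rightarrow> 'z \<Rightarrow> real) \<Rightarrow> ('th \<Rightarrow> 'z set) \<Rightarrow> 'i \<Rightarrow> 'th \<Rightarrow> 'th set set" where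
  "Xi u F i th = {K. K \<subseteq> ThetaI u F i th \<and> K \<noteq> {} \<and>
      ThetaI u F i th \<inter> Lam u F i (Zstar u F \<inter> LZ u i (F th) th \<inter> (\<Inter>th'\<in>K. F th')) = K}"

definition LhatAB :: "('i \<Rightarrow> 'th \<Rightarrow> 'z::finite \<Rightarrow> real) \<Rightarrow> ('th \<Rightarrow> 'z set) \<Rightarrow> 'i \<Rightarrow> 'th \<Rightarrow> ('z \<Rightarrow> real) set" where
  "LhatAB u F i th =
     (if F th \<subseteq> argmin_on (u i th) (Zstar u F) \<and> Xi u F i th \<noteq> {} \<and>
         Lam u F i (Zstar u F \<inter> LZ u i (F th) th) \<noteq> {}
      then Lot (Zstar u F \<inter> LZ u i (F th) th \<inter> (\<Union>K\<in>Xi u F i th. \<Inter>th'\<in>K. F th'))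
      else Lot (Zstar u F) \<inter> LY u i (unif (F th)) th)"

definition unif_mono_AB :: "('i \<Rightarrow> 'th \<Rightarrow> 'z::finite \<Rightarrow> real) \<Rightarrow> ('th \<Rightarrow> 'z set) \<Rightarrow> bool" where
  "unif_mono_AB u F \<longleftrightarrow> (\<forall>th th'.
      (\<forall>i. LhatAB u F i th \<subseteq> LY u i (unif (F th)) th') \<longrightarrow> F th \<subseteq> F th')"

definition GammaAB :: "('i \<Rightarrow> 'th \<Rightarrow> 'z::finite \<Rightarrow> real) \<Rightarrow> ('th \<Rightarrow> 'z set) \<Rightarrow> 'i \<Rightarrow> 'th \<Rightarrow> 'z set" where
  "GammaAB u F j th = (\<Union>y\<in>LhatAB u F j th. supp y)"

end

theory Submission
  imports Defs
begin


definition pt :: "'z \<Rightarrow> 'z \<Rightarrow> real" where "pt z = (\<lambda>x. if x = z then 1 else 0)"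

lemma pt_lot: "lottery (pt (z::'z::finite))" "supp (pt z) = {z}"
  by (auto simp: lottery_def pt_def supp_def)

lemma pt_EU: "EU u i th (pt (z::'z::finite)) = u i th z"
  unfolding EU_def pt_def
  by (subst sum.cong[OF refl, of _ _ "\<lambda>x. if x = z then u i th x else 0"]) auto

lemma unif_lot: assumes "(A::'z::finite set) \<noteq> {}" shows "lottery (unif A)" "supp (unif A) = A"
proof -
  have f: "finite A" by simp
  have c: "card A > 0" using assms f card_gt_0_iff by blast
  have "sum (unif A) UNIV = (\<Sum>x\<in>A. 1 / real (card A))"
    unfolding unif_def by (simp add: sum.If_cases)
  also have "\<dots> = 1" using c assms by simp
  finally show "lottery (unif A)" by (auto simp: lottery_def unif_def)
  show "supp (unif A) = A" using c assms by (auto simp: supp_def unif_def)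
qed

lemma EU_le: assumes "lottery (y::'z::finite\<Rightarrow>real)" "supp y \<subseteq> E" "\<forall>z\<in>E. u i th z \<le> c"
  shows "EU u i th y \<le> c"
proof -
  have "EU u i th y \<le> (\<Sum>z\<in>UNIV. y z * c)" unfolding EU_def
  proof (rule sum_mono)
    fix z :: 'z
    show "y z * u i th z \<le> y z * c"
    proof (cases "z \<in> E")
      case True then show ?thesis using assms by (auto simp: lottery_def intro: mult_left_mono)
    next
      case False then have "y z = 0" using assms(2) by (auto simp: supp_def)
      then show ?thesis by simp
    qed
  qed
  also have "\<dots> = c" using assms(1) by (simp add: lottery_def sum_distrib_right[symmetric])
  finally show ?thesis .
qed

lemma EU_ge: assumes "lottery (y::'z::finite\<Rightarrow>real)" "supp y \<subseteq> E" "\<forall>z\<in>E. u i th z \<ge> c"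
  shows "EU u i th y \<ge> c"
proof -
  have "EU u i th y \<ge> (\<Sum>z\<in>UNIV. y z * c)" unfolding EU_def
  proof (rule sum_mono)
    fix z :: 'z
    show "y z * u i th z \<ge> y z * c"
    proof (cases "z \<in> E")
      case True then show ?thesis using assms by (auto simp: lottery_def intro: mult_left_mono)
    next
      case False then have "y z = 0" using assms(2) by (auto simp: supp_def)
      then show ?thesis by simp
    qed
  qed
  moreover have "(\<Sum>z\<in>UNIV. y z * c) = c" using assms(1) by (simp add: lottery_def sum_distrib_right[symmetric])
  ultimately show ?thesis by simp
qed

lemma F_Zstar: "F th \<subseteq> Zstar u F"
  by (auto simp: Zstar_def)

lemma Lhat_Zstar: "y \<in> LhatAB u F i th \<Longrightarrow> lottery y \<and> supp y \<subseteq> Zstar u F"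
  unfolding LhatAB_def Lot_def by (auto split: if_splits)

lemma zmax_sub: "zmax u F i t E \<Longrightarrow> E' \<subseteq> E \<Longrightarrow> E' \<noteq> {} \<Longrightarrow> zmax u F i t E'"
  unfolding zmax_def argmax_on_def by blast


lemma unif_EU: assumes "(A::'z::finite set) \<noteq> {}" "\<forall>z\<in>A. u i th z = c"
  shows "EU u i th (unif A) = c"
proof -
  have "EU u i th (unif A) \<le> c" by (rule EU_le[OF unif_lot(1)[OF assms(1)], of A]) (use unif_lot(2)[OF assms(1)] assms(2) in auto)
  moreover have "EU u i th (unif A) \<ge> c" by (rule EU_ge[OF unif_lot(1)[OF assms(1)], of A]) (use unif_lot(2)[OF assms(1)] assms(2) in auto)
  ultimately show ?thesis by simp
qed

lemma key:
  fixes u :: "'i \<Rightarrow> 'th \<Rightarrow> 'z::finite \<Rightarrow> real"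
  assumes z: "zmax u F j t' E" and FE: "F th \<subseteq> E" and sE: "\<forall>y\<in>LhatAB u F j th. supp y \<subseteq> E"
    and m: "unif_mono_AB u F" and ne: "F th \<noteq> {}"
  shows "F th \<subseteq> F t'"
proof -
  obtain z0 where z0: "z0 \<in> F th" using ne by blast
  have EZ: "E \<subseteq> Zstar u F" using z by (simp add: zmax_def)
  have "\<forall>i. LhatAB u F i th \<subseteq> LY u i (unif (F th)) t'"
  proof (intro allI subsetI)
    fix i y assume y: "y \<in> LhatAB u F i th"
    have ly: "lottery y" and sy: "supp y \<subseteq> Zstar u F" using Lhat_Zstar[OF y] by auto
    define c where "c = u i t' z0"
    have "EU u i t' y \<le> c \<and> EU u i t' (unif (F th)) = c"
    proof (cases "i = j")
      case True
      have "E \<subseteq> argmax_on (u j t') E" using z by (simp add: zmax_def)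
      then have am: "\<forall>z\<in>E. \<forall>z'\<in>E. u i t' z' \<le> u i t' z" using True unfolding argmax_on_def by blast
      have const: "\<forall>z\<in>E. u i t' z = c" unfolding c_def
      proof
        fix z assume "z \<in> E"
        moreover have "z0 \<in> E" using z0 FE by blast
        ultimately have "u i t' z \<le> u i t' z0" "u i t' z0 \<le> u i t' z" using am by blast+
        then show "u i t' z = u i t' z0" by linarith
      qed
      have "EU u i t' y \<le> c" by (rule EU_le[OF ly, of E]) (use sE y True const in auto)
      moreover have "EU u i t' (unif (F th)) = c"
        using unif_EU[OF ne, of u i t' c] const FE by blast
      ultimately show ?thesis by simp
    next
      case False
      have "E \<subseteq> argmax_on (u i t') (Zstar u F)" using z False by (simp add: zmax_def)
      then have mx: "\<forall>z\<in>E. \<forall>z'\<in>Zstar u F. u i t' z' \<le> u i t' z" unfolding argmax_on_def by blast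
      have le: "\<forall>z\<in>Zstar u F. u i t' z \<le> c" using mx z0 FE unfolding c_def by blast
      have const: "\<forall>z\<in>F th. u i t' z = c" unfolding c_def
      proof
        fix z assume "z \<in> F th"
        then have a: "z \<in> E" "z \<in> Zstar u F" using FE EZ by blast+
        have b: "z0 \<in> E" "z0 \<in> Zstar u F" using z0 FE EZ by blast+
        have "u i t' z \<le> u i t' z0" "u i t' z0 \<le> u i t' z" using mx a b by blast+
        then show "u i t' z = u i t' z0" by linarith
      qed
      have "EU u i t' y \<le> c" using EU_le[of y "Zstar u F" u i t' c] ly sy le by blast
      moreover have "EU u i t' (unif (F th)) = c"
        using unif_EU[OF ne, of u i t' c] const by blast
      ultimately show ?thesis by simp
    qed
    then show "y \<in> LY u i (unif (F th)) t'" using ly by (simp add: LY_def)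
  qed
  moreover have "(\<forall>i. LhatAB u F i th \<subseteq> LY u i (unif (F th)) t') \<longrightarrow> F th \<subseteq> F t'"
    using m unfolding unif_mono_AB_def by blast
  ultimately show ?thesis by blast
qed


lemma partA:
  fixes u :: "'i \<Rightarrow> 'th \<Rightarrow> 'z::finite \<Rightarrow> real"
  assumes ne: "\<And>th. F th \<noteq> {}" and m: "unif_mono_AB u F" and z: "zmax u F j t' (Zstar u F)"
  shows "Zstar u F \<subseteq> F t'"
proof -
  have all: "F th \<subseteq> F t'" for th
    by (rule key[OF z F_Zstar _ m ne]) (use Lhat_Zstar[of _ u F j th] in blast)
  have "\<exists>i. imax u i UNIV"
  proof (rule ccontr)
    assume n: "\<not> (\<exists>i. imax u i UNIV)"
    then have "Zstar u F = UNIV" by (simp add: Zstar_def)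
    then have "imax u j UNIV" using z unfolding zmax_def imax_def by auto
    then show False using n by blast
  qed
  then have "Zstar u F = (\<Union>th. F th)" by (simp add: Zstar_def)
  then show ?thesis using all by auto
qed

lemma pt_Lot: "z \<in> S \<Longrightarrow> pt z \<in> Lot (S::'z::finite set)"
  using pt_lot[of z] by (simp add: Lot_def)

lemma fixp:
  assumes mono: "\<And>K K'. K \<subseteq> K' \<Longrightarrow> K' \<subseteq> T \<Longrightarrow> G K \<subseteq> G K'"
    and into: "\<And>K. G K \<subseteq> T" and a: "a \<subseteq> T" "a \<subseteq> G a" "a \<noteq> {}"
  shows "\<exists>K. K \<subseteq> T \<and> K \<noteq> {} \<and> G K = K"
proof -
  define KS where "KS = \<Union>{K. K \<subseteq> T \<and> K \<subseteq> G K}"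
  have KT: "KS \<subseteq> T" unfolding KS_def by blast
  have aK: "a \<subseteq> KS" using a unfolding KS_def by blast
  have sub: "KS \<subseteq> G KS"
  proof
    fix x assume "x \<in> KS"
    then obtain K where K: "K \<subseteq> T" "K \<subseteq> G K" "x \<in> K" unfolding KS_def by blast
    have "K \<subseteq> KS" using K unfolding KS_def by blast
    then have "G K \<subseteq> G KS" using mono KT by blast
    then show "x \<in> G KS" using K by blast
  qed
  have "G KS \<subseteq> G (G KS)" using mono[OF sub into] .
  then have "G KS \<subseteq> KS" using into unfolding KS_def by blast
  then show ?thesis using sub KT aK a(3) by blast
qed

lemma mix_lemma:
  fixes f :: "'z::finite \<Rightarrow> real"
  assumes b: "b \<in> Z" "\<forall>x\<in>Z. f b \<le> f x" "f b < v" and zZ: "z \<in> Z"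
  shows "\<exists>y. lottery y \<and> supp y \<subseteq> Z \<and> z \<in> supp y \<and> (\<Sum>x\<in>UNIV. y x * f x) \<le> v"
proof (cases "f z \<le> v")
  case True
  have "(\<Sum>x\<in>UNIV. pt z x * f x) = f z" using pt_EU[of "\<lambda>_ _. f" undefined undefined z] by (simp add: EU_def)
  then show ?thesis using True pt_lot[of z] zZ by (intro exI[of _ "pt z"]) auto
next
  case False
  then have zb: "z \<noteq> b" and gt: "f z > f b" using b by auto
  define t where "t = (v - f b) / (f z - f b)"
  have t0: "0 < t" and t1: "t < 1" using False b gt unfolding t_def by (auto simp: field_simps)
  define y where "y = (\<lambda>x. t * pt z x + (1 - t) * pt b x)"
  have spt: "sum (pt w) UNIV = 1" for w :: 'z using pt_lot[of w] by (simp add: lottery_def)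
  have Ept: "(\<Sum>x\<in>UNIV. pt w x * f x) = f w" for w using pt_EU[of "\<lambda>_ _. f" undefined undefined w] by (simp add: EU_def)
  have "sum y UNIV = t * sum (pt z) UNIV + (1 - t) * sum (pt b) UNIV"
    unfolding y_def by (simp add: sum.distrib sum_distrib_left)
  then have sy: "sum y UNIV = 1" using spt by simp
  have ynn: "\<forall>x. y x \<ge> 0" using t0 t1 unfolding y_def pt_def by auto
  have "(\<Sum>x\<in>UNIV. y x * f x) = t * (\<Sum>x\<in>UNIV. pt z x * f x) + (1 - t) * (\<Sum>x\<in>UNIV. pt b x * f x)"
    unfolding y_def by (simp add: sum.distrib sum_distrib_left distrib_right mult.assoc)
  also have "\<dots> = t * f z + (1 - t) * f b" using Ept by simp
  also have "\<dots> = f b + t * (f z - f b)" by (simp add: algebra_simps)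
  also have "t * (f z - f b) = v - f b" using gt unfolding t_def by simp
  also have "f b + (v - f b) = v" by simp
  finally have E: "(\<Sum>x\<in>UNIV. y x * f x) = v" .
  have "supp y \<subseteq> {z, b}" unfolding supp_def y_def pt_def by auto
  then have "supp y \<subseteq> Z" using b zZ by blast
  moreover have "z \<in> supp y" using zb t0 unfolding supp_def y_def pt_def by auto
  ultimately show ?thesis using sy ynn E by (intro exI[of _ y]) (auto simp: lottery_def)
qed


lemma partB:
  fixes u :: "'i \<Rightarrow> 'th \<Rightarrow> 'z::finite \<Rightarrow> real"
  assumes ne: "\<And>th. F th \<noteq> {}" and m: "unif_mono_AB u F" and zG: "zmax u F j t' (GammaAB u F j th)"
  shows "GammaAB u F j th \<subseteq> F t'"
proof -
  define Z where "Z = Zstar u F"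
  define M where "M = Z \<inter> LZ u j (F th) th"
  define G where "G = GammaAB u F j th"
  define T where "T = ThetaI u F j th"
  define S where "S = M \<inter> (\<Union>K\<in>Xi u F j th. \<Inter>th'\<in>K. F th')"
  define C where "C = (F th \<subseteq> argmin_on (u j th) Z \<and> Xi u F j th \<noteq> {} \<and> Lam u F j M \<noteq> {})"
  have FZ: "F th \<subseteq> Z" unfolding Z_def by (rule F_Zstar)
  have zG': "zmax u F j t' G" using zG unfolding G_def .
  have sG: "\<forall>y\<in>LhatAB u F j th. supp y \<subseteq> G" unfolding G_def GammaAB_def by blast
  have GZ: "G \<subseteq> Z" using Lhat_Zstar[of _ u F j th] unfolding G_def GammaAB_def Z_def by blast
  have LC: "C \<Longrightarrow> LhatAB u F j th = Lot S"
    unfolding LhatAB_def C_def S_def M_def Z_def by simp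
  have LnC: "\<not> C \<Longrightarrow> LhatAB u F j th = Lot Z \<inter> LY u j (unif (F th)) th"
  proof -
    assume "\<not> C"
    then have "\<not> (F th \<subseteq> argmin_on (u j th) (Zstar u F) \<and> Xi u F j th \<noteq> {} \<and>
         Lam u F j (Zstar u F \<inter> LZ u j (F th) th) \<noteq> {})" unfolding C_def M_def Z_def .
    then show ?thesis unfolding LhatAB_def Z_def by (rule if_not_P)
  qed
  have SG: "C \<Longrightarrow> S \<subseteq> G"
  proof
    fix z assume C: C and z: "z \<in> S"
    then have "pt z \<in> LhatAB u F j th" using LC pt_Lot by blast
    then show "z \<in> G" using sG pt_lot(2)[of z] by blast
  qed
  have FM: "F th \<subseteq> argmin_on (u j th) Z \<Longrightarrow> F th \<subseteq> M"
    unfolding M_def LZ_def argmin_on_def using FZ by blast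
  have FT: "K \<subseteq> T \<Longrightarrow> F th \<subseteq> (\<Inter>th'\<in>K. F th')" for K unfolding T_def ThetaI_def by blast
  have FG: "F th \<subseteq> G"
  proof (cases C)
    case True
    then obtain K where K: "K \<in> Xi u F j th" unfolding C_def by blast
    then have "K \<subseteq> T \<and> K \<noteq> {} \<and> ThetaI u F j th \<inter> Lam u F j (Zstar u F \<inter> LZ u j (F th) th \<inter> (\<Inter>th'\<in>K. F th')) = K"
      unfolding Xi_def mem_Collect_eq T_def .
    then have KT: "K \<subseteq> T" by blast
    have A: "F th \<subseteq> argmin_on (u j th) Z" using True unfolding C_def by blast
    have "F th \<subseteq> M \<inter> (\<Inter>th'\<in>K. F th')" using FT[OF KT] FM[OF A] by blast
    moreover have "M \<inter> (\<Inter>th'\<in>K. F th') \<subseteq> S" using K unfolding S_def by blast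
    ultimately have "F th \<subseteq> S" by (rule subset_trans)
    then show ?thesis using SG True by blast
  next
    case False
    have "unif (F th) \<in> LhatAB u F j th" using LnC[OF False] unif_lot[OF ne[of th]] FZ
      by (simp add: Lot_def LY_def)
    then show ?thesis using sG unif_lot(2)[OF ne[of th]] by blast
  qed
  have Fsub: "F th \<subseteq> F t'" by (rule key[OF zG' FG sG m ne])
  have tT: "t' \<in> T" unfolding T_def ThetaI_def using zmax_sub[OF zG' FG ne] Fsub by blast
  show ?thesis unfolding G_def[symmetric]
  proof (cases C)
    case True
    show "G \<subseteq> F t'"
    proof
      fix z assume zG: "z \<in> G"
      have "z \<in> (\<Union>y\<in>Lot S. supp y)" using zG LC[OF True] unfolding G_def GammaAB_def by simp
      then obtain y where y: "y \<in> Lot S" "z \<in> supp y" by blast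
      then have "z \<in> S" unfolding Lot_def by blast
      then obtain K where K: "K \<in> Xi u F j th" and zK: "z \<in> (\<Inter>th'\<in>K. F th')" unfolding S_def by blast
      have Kx: "K \<subseteq> T \<and> K \<noteq> {} \<and> T \<inter> Lam u F j (M \<inter> (\<Inter>th'\<in>K. F th')) = K"
        using K unfolding Xi_def mem_Collect_eq T_def M_def Z_def .
      then have KT: "K \<subseteq> T" and Keq: "T \<inter> Lam u F j (M \<inter> (\<Inter>th'\<in>K. F th')) = K" by auto
      have "M \<inter> (\<Inter>th'\<in>K. F th') \<subseteq> S" using K unfolding S_def by blast
      then have sub: "M \<inter> (\<Inter>th'\<in>K. F th') \<subseteq> G" using SG[OF True] by (rule subset_trans)
      have "F th \<subseteq> M \<inter> (\<Inter>th'\<in>K. F th')" using FT[OF KT] FM True unfolding C_def by blast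
      then have "M \<inter> (\<Inter>th'\<in>K. F th') \<noteq> {}" using ne[of th] by blast
      then have "t' \<in> Lam u F j (M \<inter> (\<Inter>th'\<in>K. F th'))"
        using zmax_sub[OF zG' sub] unfolding Lam_def by blast
      then have "t' \<in> K" using Keq tT by blast
      then show "z \<in> F t'" using zK by blast
    qed
  next
    case False
    note L = LnC[OF False]
    show "G \<subseteq> F t'"
    proof (cases "F th \<subseteq> argmin_on (u j th) Z")
      case A: True
      have FM': "F th \<subseteq> M" using FM[OF A] .
      have MG: "M \<subseteq> G"
      proof
        fix z assume z: "z \<in> M"
        have "EU u j th (unif (F th)) \<ge> u j th z"
          by (rule EU_ge[OF unif_lot(1)[OF ne[of th]], of "F th"])
             (use z unif_lot(2)[OF ne[of th]] in \<open>auto simp: M_def LZ_def\<close>)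
        then have "pt z \<in> LhatAB u F j th" using L z pt_lot[of z] pt_EU[of u j th z]
          by (auto simp: Lot_def LY_def M_def)
        then show "z \<in> G" using sG pt_lot(2)[of z] by blast
      qed
      have tM: "t' \<in> Lam u F j M" using zmax_sub[OF zG' MG] FM' ne[of th] unfolding Lam_def by blast
      define GG where "GG = (\<lambda>K. T \<inter> Lam u F j (M \<inter> (\<Inter>th'\<in>K. F th')))"
      have "\<exists>K. K \<subseteq> T \<and> K \<noteq> {} \<and> GG K = K"
      proof (rule fixp)
        fix K K' assume KK: "K \<subseteq> K'" "K' \<subseteq> T"
        have ne': "M \<inter> (\<Inter>th'\<in>K'. F th') \<noteq> {}" using FT[OF KK(2)] FM' ne[of th] by blast
        have "M \<inter> (\<Inter>th'\<in>K'. F th') \<subseteq> M \<inter> (\<Inter>th'\<in>K. F th')" using KK(1) by blast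
        then show "GG K \<subseteq> GG K'"
        proof -
          assume sb: "M \<inter> (\<Inter>th'\<in>K'. F th') \<subseteq> M \<inter> (\<Inter>th'\<in>K. F th')"
          show ?thesis
          proof
            fix x assume "x \<in> GG K"
            then have x: "x \<in> T" "zmax u F j x (M \<inter> (\<Inter>th'\<in>K. F th'))" unfolding GG_def Lam_def by auto
            have "zmax u F j x (M \<inter> (\<Inter>th'\<in>K'. F th'))" by (rule zmax_sub[OF x(2) sb ne'])
            then show "x \<in> GG K'" using x(1) unfolding GG_def Lam_def by simp
          qed
        qed
      next
        show "GG K \<subseteq> T" for K unfolding GG_def by blast
      next
        show "{t'} \<subseteq> T" using tT by blast
        show "{t'} \<noteq> {}" by blast
        have ne': "M \<inter> F t' \<noteq> {}" using Fsub FM' ne[of th] by blast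
        have "zmax u F j t' M" using tM unfolding Lam_def by simp
        then have "zmax u F j t' (M \<inter> F t')" by (rule zmax_sub) (use ne' in auto)
        then have "t' \<in> Lam u F j (M \<inter> F t')" unfolding Lam_def by simp
        then show "{t'} \<subseteq> GG {t'}" using tT unfolding GG_def by simp
      qed
      then obtain K where "K \<subseteq> T" "K \<noteq> {}" "GG K = K" by blast
      then have "K \<in> Xi u F j th" unfolding Xi_def GG_def T_def M_def Z_def by simp
      then have C using A tM unfolding C_def by auto
      then show ?thesis using False by blast
    next
      case B: False
      have Zne: "Z \<noteq> {}" using FZ ne[of th] by blast
      define f where "f = u j th"
      define mm where "mm = Min (f ` Z)"
      have "mm \<in> f ` Z" unfolding mm_def using Zne by (simp add: Min_in)
      then obtain b where b: "b \<in> Z" "f b = mm" by blast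
      have bmin: "\<forall>x\<in>Z. f b \<le> f x" using b unfolding mm_def by simp
      obtain a where a: "a \<in> F th" "a \<notin> argmin_on f Z" using B unfolding f_def by blast
      have "a \<in> Z" using a FZ by blast
      then obtain w where w: "w \<in> Z" "\<not> f a \<le> f w" using a unfolding argmin_on_def by blast
      have ab: "f b < f a" using w bmin by force
      define v where "v = EU u j th (unif (F th))"
      have "(\<Sum>x\<in>UNIV. unif (F th) x * f b) < (\<Sum>x\<in>UNIV. unif (F th) x * f x)"
      proof (rule sum_strict_mono_ex1)
        show "finite (UNIV::'z set)" by simp
        show "\<forall>x\<in>UNIV. unif (F th) x * f b \<le> unif (F th) x * f x"
          using bmin FZ by (auto simp: unif_def intro!: divide_right_mono)
        have "card (F th) > 0" using ne[of th] by (simp add: card_gt_0_iff)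
        then show "\<exists>x\<in>UNIV. unif (F th) x * f b < unif (F th) x * f x"
          using a ab by (intro bexI[of _ a]) (auto simp: unif_def intro!: divide_strict_right_mono)
      qed
      moreover have "(\<Sum>x\<in>UNIV. unif (F th) x * f b) = f b"
        using unif_lot(1)[OF ne[of th]] by (simp add: lottery_def sum_distrib_right[symmetric])
      ultimately have bv: "f b < v" unfolding v_def EU_def f_def by simp
      have ZG: "Z \<subseteq> G"
      proof
        fix z assume z: "z \<in> Z"
        obtain y where y: "lottery y" "supp y \<subseteq> Z" "z \<in> supp y" "(\<Sum>x\<in>UNIV. y x * f x) \<le> v"
          using mix_lemma[OF b(1) bmin bv z] by blast
        then have "y \<in> LhatAB u F j th" using L unfolding Lot_def LY_def v_def f_def EU_def by simp
        then show "z \<in> G" using sG y(3) by blast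
      qed
      then have "G = Z" using GZ by blast
      then show ?thesis using partA[OF ne m] zG' unfolding Z_def by blast
    qed
  qed
qed


theorem lemma9:
  fixes u :: "'i::finite \<Rightarrow> 'th::countable \<Rightarrow> 'z::finite \<Rightarrow> real"
    and F :: "'th \<Rightarrow> 'z set"
  assumes "card (UNIV :: 'i set) \<ge> 3"
    and "\<And>th. F th \<noteq> {}"
    and "unif_mono_AB u F"
  shows "(\<forall>j th'. zmax u F j th' (Zstar u F) \<longrightarrow> Zstar u F \<subseteq> F th')
       \<and> (\<forall>j th th'. zmax u F j th' (GammaAB u F j th) \<longrightarrow> GammaAB u F j th \<subseteq> F th')"
  using partA[OF assms(2,3)] partB[OF assms(2,3)] by blast

end
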